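(* Let $k\ge 1$ and $n\ge 2k+1$. The map $f:X_{n,k}\to X_{n,k}$ is a bijection, and for every $x\in X_{n,k}$ the strings $x$ and $f(x)$ have no $1$ at a common position, $f(x)\neq x$ and $f^2(x)\ne x$. Consequently, for every $x\in X_{n,k}$ the sequence $C(x)=(x,f(x),f^2(x),\dots)$, continued until $x$ reappears, is a cycle of length at least $3$ in $K(n,k)$ (vertices identified with characteristic vectors), and these cycles partition the vertex set.
   Context: $X_{n,k}$ is the set of binary strings of length $n$ with exactly $k$ ones; a $k$-subset of $[n]$ is identified with its characteristic vector, so two vertices of the Kneser graph $K(n,k)$ are adjacent iff their strings have no $1$ at a common position. Positions are taken cyclically modulo $n$. Cyclic parenthesis matching: regard $x$ as a cyclic string, $1$s as opening and $0$s as closing brackets; each $1$ at position $i$ is matched to the last $0$ of the shortest cyclic substring starting at position $i$ and going to the right that contains equally many $0$s and $1$s. Since $n\ge 2k+1$, every $1$ is matched and exactly $n-2k$ zeros are unmatched. $f(x)$ is obtained from $x$ by complementing all matched bits (matched $1$s and matched $0$s), leaving unmatched $0$s unchanged. *)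

theory Defs
  imports Main
begin

text \<open>Binary strings are bool lists (True = 1, False = 0); positions are
  0..<n and are read cyclically modulo n.\<close>

definition X :: "nat \<Rightarrow> nat \<Rightarrow> bool list set" where
  "X n k = {x. length x = n \<and> count_list x True = k}"

definition kneser_adj :: "bool list \<Rightarrow> bool list \<Rightarrow> bool" where
  "kneser_adj x y \<longleftrightarrow> length x = length y \<and> (\<forall>j < length x. \<not> (x ! j \<and> y ! j))"

definition cyc_ones :: "bool list \<Rightarrow> nat \<Rightarrow> nat \<Rightarrow> nat" where
  "cyc_ones x i l = card {t. t < l \<and> x ! ((i + t) mod length x)}"

definition cyc_balanced :: "bool list \<Rightarrow> nat \<Rightarrow> nat \<Rightarrow> bool" where
  "cyc_balanced x i l \<longleftrightarrow> 0 < l \<and> l \<le> length x \<and> 2 * cyc_ones x i l = l"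

definition has_match :: "bool list \<Rightarrow> nat \<Rightarrow> bool" where
  "has_match x i \<longleftrightarrow> (\<exists>l. cyc_balanced x i l)"

definition match_len :: "bool list \<Rightarrow> nat \<Rightarrow> nat" where
  "match_len x i = (LEAST l. cyc_balanced x i l)"

text \<open>Position of the 0 matched to the 1 at position i (last position of that substring).\<close>
definition mate :: "bool list \<Rightarrow> nat \<Rightarrow> nat" where
  "mate x i = (i + match_len x i - 1) mod length x"

definition matched :: "bool list \<Rightarrow> nat \<Rightarrow> bool" where
  "matched x j \<longleftrightarrow> (x ! j \<and> has_match x j) \<or>
     (\<exists>i < length x. x ! i \<and> has_match x i \<and> mate x i = j)"

definition f :: "bool list \<Rightarrow> bool list" where
  "f x = map (\<lambda>j. if matched x j then \<not> x ! j else x ! j) [0..<length x]"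

definition orbit :: "bool list \<Rightarrow> bool list set" where
  "orbit x = {(f ^^ i) x | i. True}"

end

theory Submission
  imports Defs
begin


definition S :: "bool list \<Rightarrow> nat \<Rightarrow> nat \<Rightarrow> int" where
  "S z i l = 2 * int (cyc_ones z i l) - int l"

lemma cyc_ones_Suc:
  "cyc_ones z i (Suc l) = cyc_ones z i l + (if z ! ((i + l) mod length z) then 1 else 0)"
proof -
  have "{t. t < Suc l \<and> z ! ((i + t) mod length z)} =
        {t. t < l \<and> z ! ((i + t) mod length z)} \<union> (if z ! ((i + l) mod length z) then {l} else {})"
    by (auto simp: less_Suc_eq)
  then show ?thesis unfolding cyc_ones_def by auto
qed

lemma S_0[simp]: "S z i 0 = 0" by (simp add: S_def cyc_ones_def)

lemma S_Suc: "S z i (Suc l) = S z i l + (if z ! ((i+l) mod length z) then 1 else -1)"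
  by (simp add: S_def cyc_ones_Suc)

lemma S_step: "\<bar>S z i (Suc l) - S z i l\<bar> \<le> 1"
  by (simp add: S_Suc)

lemma S_add: "S z i (a + b) = S z i a + S z (i + a) b"
  by (induction b) (simp_all add: S_Suc add.assoc)

lemma S_cong: "a mod length z = b mod length z \<Longrightarrow> S z a l = S z b l"
proof (induction l)
  case (Suc l)
  have "(a + l) mod length z = (b + l) mod length z"
    using Suc.prems by (metis mod_add_left_eq)
  then show ?case using Suc by (simp add: S_Suc)
qed simp

lemma S_shift: "S z (Suc i) (length z) = S z i (length z)"
proof -
  have "S z i (Suc (length z)) = S z i 1 + S z (Suc i) (length z)"
    using S_add[of z i 1 "length z"] by simp
  moreover have "S z i (Suc (length z)) = S z i (length z) + S z (i + length z) 1"
    using S_add[of z i "length z" 1] by simp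
  moreover have "S z (i + length z) 1 = S z i 1" by (rule S_cong) simp
  ultimately show ?thesis by simp
qed

lemma S_full: "S z i (length z) = 2 * int (count_list z True) - int (length z)"
proof (induction i)
  case 0
  have "cyc_ones z 0 (length z) = count_list z True"
    unfolding cyc_ones_def count_list_eq_length_filter length_filter_conv_card
    by (rule arg_cong[where f=card]) auto
  then show ?case by (simp add: S_def)
next
  case (Suc i) then show ?case using S_shift by simp
qed

lemma ivt_up:
  fixes h :: "nat \<Rightarrow> int"
  assumes st: "\<And>t. \<bar>h (Suc t) - h t\<bar> \<le> 1" and "a \<le> b" "h a \<le> c" "c \<le> h b"
  shows "\<exists>t. a \<le> t \<and> t \<le> b \<and> h t = c"
proof -
  have "\<forall>b. b = a + d \<longrightarrow> c \<le> h b \<longrightarrow> (\<exists>t. a \<le> t \<and> t \<le> b \<and> h t = c)" for d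
  proof (induction d)
    case 0 then show ?case using assms(3) by auto
  next
    case (Suc d)
    show ?case
    proof (intro allI impI)
      fix b assume b: "b = a + Suc d" "c \<le> h b"
      show "\<exists>t. a \<le> t \<and> t \<le> b \<and> h t = c"
      proof (cases "c \<le> h (a + d)")
        case True then show ?thesis using Suc.IH b by fastforce
      next
        case False
        then have "h b = c" using st[of "a+d"] b by auto
        then show ?thesis using b by (intro exI[of _ b]) auto
      qed
    qed
  qed
  then show ?thesis using assms by (metis le_add_diff_inverse)
qed

lemma ivt_down:
  fixes h :: "nat \<Rightarrow> int"
  assumes st: "\<And>t. \<bar>h (Suc t) - h t\<bar> \<le> 1" and "a \<le> b" "c \<le> h a" "h b \<le> c"
  shows "\<exists>t. a \<le> t \<and> t \<le> b \<and> h t = c"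
proof -
  have "\<exists>t. a \<le> t \<and> t \<le> b \<and> - h t = - c"
    by (rule ivt_up[where h="\<lambda>t. - h t"]) (use st assms in \<open>auto simp: abs_minus_commute\<close>)
  then show ?thesis by auto
qed

lemma balanced_iff: "cyc_balanced z i l \<longleftrightarrow> 0 < l \<and> l \<le> length z \<and> S z i l = 0"
  by (auto simp: cyc_balanced_def S_def)



lemma mod_cancel_nat: "(a + c) mod (n::nat) = (b + c) mod n \<Longrightarrow> a mod n = b mod n"
  by (simp add: add.commute nat_mod_eq_iff)

lemma match_char:
  assumes "0 < L" "L \<le> length z" "S z j L = 0" "\<forall>s. 0 < s \<and> s < L \<longrightarrow> S z j s \<noteq> 0"
  shows "has_match z j" "match_len z j = L"
proof -
  show "has_match z j" using assms by (auto simp: has_match_def balanced_iff)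
  show "match_len z j = L" unfolding match_len_def
  proof (rule Least_equality)
    show "cyc_balanced z j L" using assms by (simp add: balanced_iff)
    fix y assume "cyc_balanced z j y"
    then show "L \<le> y" using assms by (metis balanced_iff not_le)
  qed
qed

lemma one_match:
  assumes A: "2 * count_list z True < length z" and i: "i < length z" "z ! i"
  shows "has_match z i" "2 \<le> match_len z i" "match_len z i \<le> length z"
    "S z i (match_len z i) = 0" "\<forall>s. 0 < s \<and> s < match_len z i \<longrightarrow> S z i s > 0"
proof -
  have g1: "S z i 1 = 1" using S_Suc[of z i 0] i by simp
  have gn: "S z i (length z) < 0" using S_full[of z i] A by simp
  have "1 \<le> length z" using i by simp
  then obtain l where l: "1 \<le> l" "l \<le> length z" "S z i l = 0"
    using ivt_down[of "S z i" 1 "length z" 0] S_step g1 gn by force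
  then show hm: "has_match z i" by (auto simp: has_match_def balanced_iff intro!: exI[of _ l])
  let ?L = "match_len z i"
  have bal: "cyc_balanced z i ?L" using hm unfolding has_match_def match_len_def by (metis LeastI)
  then show "?L \<le> length z" "S z i ?L = 0" by (auto simp: balanced_iff)
  show pos: "\<forall>s. 0 < s \<and> s < ?L \<longrightarrow> S z i s > 0"
  proof (intro allI impI)
    fix s assume s: "0 < s \<and> s < ?L"
    show "S z i s > 0"
    proof (rule ccontr)
      assume "\<not> 0 < S z i s"
      then obtain t where t: "1 \<le> t" "t \<le> s" "S z i t = 0"
        using ivt_down[of "S z i" 1 s 0] S_step g1 s by force
      then have "cyc_balanced z i t" using s \<open>?L \<le> length z\<close> by (simp add: balanced_iff)
      then have "?L \<le> t" unfolding match_len_def by (rule Least_le)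
      then show False using t s by simp
    qed
  qed
  show "2 \<le> ?L"
  proof -
    have "?L \<noteq> 1" using g1 \<open>S z i ?L = 0\<close> by auto
    moreover have "?L > 0" using bal by (simp add: balanced_iff)
    ultimately show ?thesis by simp
  qed
qed

lemma mate_lt: "0 < length z \<Longrightarrow> mate z i < length z"
  by (simp add: mate_def)

lemma one_mate_zero:
  assumes A: "2 * count_list z True < length z" and i: "i < length z" "z ! i"
  shows "\<not> z ! mate z i"
proof -
  note m = one_match[OF assms]
  let ?L = "match_len z i"
  have e: "?L = Suc (?L - 1)" using m by simp
  have "S z i (?L - 1) > 0" using m(2) m(5) by simp
  moreover have "S z i ?L = S z i (?L - 1) + (if z ! ((i + (?L - 1)) mod length z) then 1 else -1)"
    using S_Suc[of z i "?L - 1"] e by simp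
  ultimately have "\<not> z ! ((i + (?L - 1)) mod length z)" using m(4) by (auto split: if_splits)
  moreover have "i + (?L - 1) = i + ?L - 1" using m(2) by simp
  ultimately show ?thesis by (simp add: mate_def)
qed

lemma mate_inj:
  assumes A: "2 * count_list z True < length z" and i: "i < length z" "z ! i"
    and i': "i' < length z" "z ! i'" and eq: "mate z i = mate z i'"
  shows "i = i'"
proof -
  note m = one_match[OF A i] and m' = one_match[OF A i']
  let ?n = "length z"
  have main: "j = j'" if j: "j < ?n" "z ! j" and j': "j' < ?n" "z ! j'"
    and e: "mate z j = mate z j'" and le: "match_len z j \<le> match_len z j'" for j j'
  proof -
    note m = one_match[OF A j] and m' = one_match[OF A j']
    let ?l = "match_len z j" and ?l' = "match_len z j'"
    have "(j' + (?l'-?l) + (?l-1)) mod ?n = (j + (?l-1)) mod ?n"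
    proof -
      have "j' + (?l'-?l) + (?l-1) = j' + ?l' - 1" "j + (?l-1) = j + ?l - 1" using m(2) m'(2) le by auto
      then show ?thesis using e by (simp add: mate_def)
    qed
    then have d: "(j' + (?l'-?l)) mod ?n = j mod ?n" by (rule mod_cancel_nat)
    show ?thesis
    proof (cases "?l = ?l'")
      case True then show ?thesis using d j j' by simp
    next
      case False
      have "S z j' ?l' = S z j' (?l'-?l) + S z (j'+(?l'-?l)) ?l"
        using S_add[of z j' "?l'-?l" ?l] le by simp
      moreover have "S z (j'+(?l'-?l)) ?l = S z j ?l" using d by (intro S_cong) simp
      ultimately have "S z j' (?l'-?l) = 0" using m(4) m'(4) by simp
      moreover have "S z j' (?l'-?l) > 0" using m'(5) False le m(2) by simp
      ultimately show ?thesis by simp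
    qed
  qed
  show ?thesis
    by (metis main i i' eq nat_le_linear)
qed



lemma inside_matched:
  assumes A: "2 * count_list z True < length z" and i: "i < length z" "z ! i"
    and t: "t < match_len z i"
  shows "matched z ((i + t) mod length z)"
proof -
  note m = one_match[OF A i]
  let ?n = "length z" and ?L = "match_len z i" and ?j = "(i + t) mod length z"
  have n0: "0 < ?n" using i(1) by linarith
  have jl: "?j < ?n" using n0 by simp
  show ?thesis
  proof (cases "z ! ?j")
    case True
    then show ?thesis using one_match(1)[OF A jl True] by (simp add: matched_def)
  next
    case False
    show ?thesis
    proof (cases "t = ?L - 1")
      case True
      then have "mate z i = ?j" using m(2) by (simp add: mate_def)
      then show ?thesis using i m(1) unfolding matched_def by blast
    next
      case False2: False
      define G where "G = S z i"
      have Gs: "\<And>s. \<bar>G (Suc s) - G s\<bar> \<le> 1" unfolding G_def by (rule S_step)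
      have step: "G (Suc t) = G t - 1" using False S_Suc[of z i t] unfolding G_def by simp
      define c where "c = G (Suc t)"
      have c0: "c > 0" using m(5) t False2 unfolding c_def G_def by simp
      define R where "R = {r. r \<le> t \<and> G r = c}"
      have finR: "finite R" unfolding R_def by simp
      have neR: "R \<noteq> {}"
      proof -
        obtain r where "0 \<le> r" "r \<le> t" "G r = c"
          using ivt_up[of G 0 t c] Gs c0 step unfolding c_def G_def by force
        then show ?thesis unfolding R_def by blast
      qed
      define r where "r = Max R"
      have rR: "r \<in> R" unfolding r_def using finR neR by simp
      then have rt: "r \<le> t" and Gr: "G r = c" unfolding R_def by auto
      have "r \<noteq> t" using Gr step unfolding c_def by auto
      then have rt': "r < t" using rt by simp
      have gt: "G s > c" if s: "r < s" "s \<le> t" for s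
      proof (rule ccontr)
        assume "\<not> c < G s"
        then obtain s' where s': "s \<le> s'" "s' \<le> t" "G s' = c"
          using ivt_up[of G s t c] Gs s step unfolding c_def by force
        then have "s' \<in> R" unfolding R_def by simp
        then have "s' \<le> r" unfolding r_def using finR by simp
        then show False using s s' by simp
      qed
      define j0 where "j0 = (i + r) mod ?n"
      have j0l: "j0 < ?n" unfolding j0_def using n0 by simp
      have "G (Suc r) > c" using gt[of "Suc r"] rt' by simp
      then have zj0: "z ! j0" using S_Suc[of z i r] Gr unfolding G_def j0_def by (auto split: if_splits)
      have Sj0: "S z j0 s = G (r + s) - G r" for s
      proof -
        have "S z j0 s = S z (i + r) s" unfolding j0_def by (rule S_cong) simp
        then show ?thesis unfolding G_def using S_add[of z i r s] by simp
      qed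
      have Ln: "?L \<le> ?n" using m(3) .
      have mc: "has_match z j0" "match_len z j0 = Suc t - r"
      proof -
        have a: "S z j0 (Suc t - r) = 0" using Sj0[of "Suc t - r"] rt' Gr unfolding c_def by simp
        have b: "\<forall>s. 0 < s \<and> s < Suc t - r \<longrightarrow> S z j0 s \<noteq> 0"
        proof (intro allI impI)
          fix s assume "0 < s \<and> s < Suc t - r"
          then have "G (r + s) > c" using gt[of "r+s"] by linarith
          then show "S z j0 s \<noteq> 0" using Sj0[of s] Gr by simp
        qed
        show "has_match z j0" "match_len z j0 = Suc t - r"
          using match_char[of "Suc t - r" z j0] a b rt' t Ln by auto
      qed
      have "mate z j0 = ?j"
      proof -
        have "mate z j0 = (j0 + (Suc t - r) - 1) mod ?n" by (simp add: mate_def mc(2))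
        also have "j0 + (Suc t - r) - 1 = j0 + (t - r)" using rt' by simp
        finally have "mate z j0 = ((i + r) mod ?n + (t - r)) mod ?n" unfolding j0_def .
        also have "\<dots> = (i + r + (t - r)) mod ?n" by (simp add: mod_add_left_eq)
        also have "i + r + (t - r) = i + t" using rt' by simp
        finally show ?thesis .
      qed
      then show ?thesis using j0l zj0 mc(1) unfolding matched_def by blast
    qed
  qed
qed



lemma len_calc: "(i::nat) < n \<Longrightarrow> 1 \<le> l \<Longrightarrow> l \<le> n \<Longrightarrow> Suc (((i + l - 1) mod n + n - i) mod n) = l"
proof (cases "i + l - 1 < n")
  case True
  assume a: "i < n" "1 \<le> l" "l \<le> n"
  then have "(i + l - 1) mod n + n - i = (l - 1) + n" using True by simp
  moreover have "((l - 1) + n) mod n = l - 1" using a by (subst mod_add_self2) simp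
  ultimately show ?thesis using a by simp
next
  case False
  assume a: "i < n" "1 \<le> l" "l \<le> n"
  then have "(i + l - 1) mod n = i + l - 1 - n" using False by (simp add: le_mod_geq)
  then have "(i + l - 1) mod n + n - i = l - 1" using False a by simp
  then show ?thesis using a by simp
qed

lemma mod_back: "(i::nat) < n \<Longrightarrow> m < n \<Longrightarrow> (i + (m + n - i) mod n) mod n = m"
  by (simp add: mod_add_right_eq)

lemma f_len[simp]: "length (f z) = length z" by (simp add: f_def)

lemma f_nth0: "j < length z \<Longrightarrow> f z ! j = (if matched z j then \<not> z ! j else z ! j)"
  by (simp add: f_def)

lemma f_nth:
  assumes A: "2 * count_list z True < length z" and j: "j < length z"
  shows "f z ! j = (\<not> z ! j \<and> (\<exists>i < length z. z ! i \<and> mate z i = j))"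
proof (cases "z ! j")
  case True
  then have "matched z j" using one_match(1)[OF A j True] by (simp add: matched_def)
  then show ?thesis using True f_nth0[OF j] by simp
next
  case False
  have "matched z j \<longleftrightarrow> (\<exists>i < length z. z ! i \<and> mate z i = j)"
    using False one_match(1)[OF A] unfolding matched_def by blast
  then show ?thesis using False f_nth0[OF j] by simp
qed

lemma count_card: "count_list z True = card {i. i < length z \<and> z ! i}"
  by (simp add: count_list_eq_length_filter length_filter_conv_card)

lemma f_count:
  assumes A: "2 * count_list z True < length z"
  shows "count_list (f z) True = count_list z True"
proof -
  let ?O = "{i. i < length z \<and> z ! i}"
  have n0: "0 < length z" using A by linarith
  have "{j. j < length (f z) \<and> f z ! j} = mate z ` ?O"
  proof
    show "{j. j < length (f z) \<and> f z ! j} \<subseteq> mate z ` ?O" using f_nth[OF A] by auto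
    show "mate z ` ?O \<subseteq> {j. j < length (f z) \<and> f z ! j}"
    proof
      fix j assume "j \<in> mate z ` ?O"
      then obtain i where i: "i < length z" "z ! i" "j = mate z i" by auto
      then have "j < length z" "\<not> z ! j" using mate_lt[OF n0] one_mate_zero[OF A i(1,2)] by auto
      then show "j \<in> {j. j < length (f z) \<and> f z ! j}" using f_nth[OF A] i by auto
    qed
  qed
  moreover have "inj_on (mate z) ?O" using mate_inj[OF A] by (auto simp: inj_on_def)
  ultimately show ?thesis by (simp add: count_card card_image)
qed

lemma f_adj:
  assumes A: "2 * count_list z True < length z"
  shows "kneser_adj z (f z)"
  using f_nth[OF A] by (auto simp: kneser_adj_def)

lemma complement_S:
  assumes "length y = length z" "\<forall>t<L. y ! ((a + t) mod length z) = (\<not> z ! ((a + t) mod length z))"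
  shows "S y a L = - S z a L"
  using assms by (induction L) (auto simp: S_Suc)

definition bwd :: "bool list \<Rightarrow> nat \<Rightarrow> nat \<Rightarrow> bool" where
  "bwd y i m \<longleftrightarrow> i < length y \<and> m < length y \<and> y ! m \<and>
     S y i (Suc ((m + length y - i) mod length y)) = 0 \<and>
     (\<forall>s. 0 < s \<and> s < Suc ((m + length y - i) mod length y) \<longrightarrow>
        S y (i + Suc ((m + length y - i) mod length y) - s) s > 0)"

lemma one_bwd:
  assumes A: "2 * count_list z True < length z" and i: "i < length z" "z ! i"
  shows "bwd (f z) i (mate z i)"
proof -
  note m = one_match[OF A i]
  let ?n = "length z" and ?l = "match_len z i" and ?m = "mate z i"
  have n0: "0 < ?n" using i(1) by linarith
  have ml: "?m < ?n" using mate_lt[OF n0] .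
  have fm: "f z ! ?m" using f_nth[OF A ml] one_mate_zero[OF A i] i by auto
  have L: "Suc ((?m + ?n - i) mod ?n) = ?l"
    unfolding mate_def using len_calc[of i ?n ?l] i m(2,3) by simp
  have comp: "f z ! ((i + t) mod ?n) = (\<not> z ! ((i + t) mod ?n))" if "t < ?l" for t
    using inside_matched[OF A i that] f_nth0[of "(i + t) mod ?n" z] n0 by simp
  have S0: "S (f z) i ?l = 0"
    using complement_S[of "f z" z ?l i] comp m(4) by simp
  have pos: "S (f z) (i + ?l - s) s > 0" if s: "0 < s" "s < ?l" for s
  proof -
    have "S z i ?l = S z i (?l - s) + S z (i + (?l - s)) s"
      using S_add[of z i "?l - s" s] s by simp
    moreover have "S z i (?l - s) > 0" using m(5) s by simp
    ultimately have neg: "S z (i + (?l - s)) s < 0" using m(4) by simp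
    have "\<forall>t<s. f z ! ((i + (?l - s) + t) mod ?n) = (\<not> z ! ((i + (?l - s) + t) mod ?n))"
    proof (intro allI impI)
      fix t assume "t < s"
      then show "f z ! ((i + (?l - s) + t) mod ?n) = (\<not> z ! ((i + (?l - s) + t) mod ?n))"
        using comp[of "?l - s + t"] s by (simp add: add.assoc)
    qed
    then have "S (f z) (i + (?l - s)) s = - S z (i + (?l - s)) s"
      using complement_S[of "f z" z s "i + (?l - s)"] by simp
    moreover have "i + ?l - s = i + (?l - s)" using s by simp
    ultimately show ?thesis using neg by simp
  qed
  show ?thesis unfolding bwd_def using i ml fm L S0 pos by simp
qed

lemma bwd_unique:
  assumes b: "bwd y i m" and b': "bwd y i' m"
  shows "i = i'"
proof -
  let ?n = "length y"
  have key: "j = j'" if b: "bwd y j m" and b': "bwd y j' m"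
    and le: "(m + ?n - j) mod ?n \<le> (m + ?n - j') mod ?n" for j j'
  proof -
    define d where "d = (m + ?n - j) mod ?n"
    define d' where "d' = (m + ?n - j') mod ?n"
    have jn: "j < ?n" "j' < ?n" "m < ?n" using b b' by (auto simp: bwd_def)
    have e1: "(j + d) mod ?n = m" unfolding d_def using mod_back jn by simp
    have e2: "(j' + d') mod ?n = m" unfolding d'_def using mod_back jn by simp
    show ?thesis
    proof (cases "d = d'")
      case True
      then have "j mod ?n = j' mod ?n" using e1 e2 mod_cancel_nat[of j d ?n j'] by simp
      then show ?thesis using jn by simp
    next
      case False
      then have lt: "d < d'" using le unfolding d_def d'_def by simp
      have "(j' + (d' - d) + d) mod ?n = (j + d) mod ?n" using e1 e2 lt by simp
      then have c: "(j' + (d' - d)) mod ?n = j mod ?n" by (rule mod_cancel_nat)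
      have P: "\<forall>s. 0 < s \<and> s < Suc d' \<longrightarrow> S y (j' + Suc d' - s) s > 0"
        using b' unfolding bwd_def d'_def[symmetric] by blast
      have "S y (j' + Suc d' - Suc d) (Suc d) > 0"
        using P lt by blast
      moreover have "S y (j' + Suc d' - Suc d) (Suc d) = S y j (Suc d)"
        using c lt by (intro S_cong) simp
      moreover have "S y j (Suc d) = 0" using b unfolding bwd_def d_def by simp
      ultimately show ?thesis by simp
    qed
  qed
  show ?thesis using key[OF b b'] key[OF b' b] by linarith
qed

lemma f_determines:
  assumes A: "2 * count_list z True < length z" and i: "i < length z"
  shows "z ! i \<longleftrightarrow> (\<exists>m. bwd (f z) i m)"
proof
  assume "z ! i" then show "\<exists>m. bwd (f z) i m" using one_bwd[OF A i] by blast
next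
  assume "\<exists>m. bwd (f z) i m"
  then obtain m where b: "bwd (f z) i m" by blast
  then have "m < length z" "f z ! m" by (auto simp: bwd_def)
  then obtain i' where i': "i' < length z" "z ! i'" "mate z i' = m" using f_nth[OF A] by auto
  then have "bwd (f z) i' m" using one_bwd[OF A i'(1,2)] by simp
  then have "i = i'" using bwd_unique b by blast
  then show "z ! i" using i' by simp
qed

lemma f_inj:
  assumes A: "2 * count_list z True < length z" and A': "2 * count_list z' True < length z'"
    and len: "length z = length z'" and eq: "f z = f z'"
  shows "z = z'"
proof (rule nth_equalityI)
  show "length z = length z'" by fact
  fix i assume "i < length z"
  then show "z ! i = z' ! i" using f_determines[OF A] f_determines[OF A'] len eq by simp
qed



definition rk :: "nat \<Rightarrow> nat \<Rightarrow> nat \<Rightarrow> int" where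
  "rk n u p = (int p - int u - 1) mod int n"

lemma rank_mate:
  assumes A: "2 * count_list z True < length z" and i: "i < length z" "z ! i"
    and u: "u < length z" "\<not> matched z u"
  shows "rk (length z) u (mate z i) > rk (length z) u i"
proof -
  note m = one_match[OF A i]
  let ?n = "length z" and ?l = "match_len z i"
  have n0: "0 < ?n" using i(1) by linarith
  have avoid: "(i + t) mod ?n \<noteq> u" if "t < ?l" for t
    using inside_matched[OF A i that] u(2) by auto
  define a where "a = rk ?n u i"
  have a0: "0 \<le> a" "a < int ?n" unfolding a_def rk_def using n0 by auto
  have bound: "a + int ?l - 1 < int ?n"
  proof (rule ccontr)
    assume "\<not> a + int ?l - 1 < int ?n"
    define t0 where "t0 = nat (int ?n - 1 - a)"
    have t0l: "t0 < ?l" using \<open>\<not> a + int ?l - 1 < int ?n\<close> a0 unfolding t0_def by linarith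
    have "int ((i + t0) mod ?n) = (int i + (int ?n - 1 - a)) mod int ?n"
      unfolding t0_def using a0 by (simp add: zmod_int)
    also have "\<dots> = ((int i - 1 - a) + int ?n) mod int ?n"
      by (simp add: algebra_simps)
    also have "\<dots> = (int i - 1 - a) mod int ?n"
      by (rule mod_add_self2)
    also have "\<dots> = (int i - 1 - (int i - int u - 1)) mod int ?n"
      unfolding a_def rk_def by (simp add: mod_diff_right_eq)
    also have "\<dots> = int u" using u(1) by simp
    finally have "(i + t0) mod ?n = u" by simp
    then show False using avoid t0l by simp
  qed
  have "rk ?n u (mate z i) = (int ((i + ?l - 1) mod ?n) - int u - 1) mod int ?n"
    unfolding rk_def mate_def ..
  also have "\<dots> = ((int i + int ?l - 1) mod int ?n - int u - 1) mod int ?n"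
  proof -
    have e: "int ((i + ?l - 1) mod ?n) = (int i + int ?l - 1) mod int ?n"
      using m(2) by (simp add: zmod_int of_nat_diff)
    show ?thesis by (simp only: e)
  qed
  also have "\<dots> = (int i + int ?l - 1 - int u - 1) mod int ?n"
    by (metis diff_diff_eq mod_diff_left_eq)
  also have "\<dots> = ((int i - int u - 1) + (int ?l - 1)) mod int ?n"
    by (simp add: algebra_simps)
  also have "\<dots> = (a + (int ?l - 1)) mod int ?n"
    unfolding a_def rk_def by (rule mod_add_left_eq[symmetric])
  also have "\<dots> = a + (int ?l - 1)" using bound a0 m(2) by simp
  finally show ?thesis using m(2) unfolding a_def by simp
qed

lemma matched_sub:
  assumes "j < length z" "matched z j"
  shows "j \<in> {i. i < length z \<and> z ! i} \<union> mate z ` {i. i < length z \<and> z ! i}"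
  using assms unfolding matched_def by auto

lemma f_f_neq:
  assumes A: "2 * count_list z True < length z" and k: "1 \<le> count_list z True"
  shows "f (f z) \<noteq> z"
proof
  assume ff: "f (f z) = z"
  let ?n = "length z" and ?O = "{i. i < length z \<and> z ! i}"
  define y where "y = f z"
  have Ay: "2 * count_list y True < length y" using A f_count[OF A] unfolding y_def by simp
  have ly: "length y = ?n" unfolding y_def by simp
  have fy: "f y = z" using ff unfolding y_def .
  have n0: "0 < ?n" using A by linarith
  obtain u where u: "u < ?n" "\<not> matched z u"
  proof -
    let ?U = "?O \<union> mate z ` ?O"
    have fin: "finite ?U" by simp
    have "card ?U \<le> card ?O + card (mate z ` ?O)" by (rule card_Un_le)
    also have "\<dots> \<le> 2 * card ?O" using card_image_le[of ?O "mate z"] by simp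
    also have "\<dots> < ?n" using A by (simp add: count_card)
    finally have cU: "card ?U < ?n" .
    have sub: "\<not> {..<?n} \<subseteq> ?U"
    proof
      assume "{..<?n} \<subseteq> ?U"
      then have "card {..<?n} \<le> card ?U" by (rule card_mono[OF fin])
      then show False using cU by simp
    qed
    then obtain u where u1: "u < ?n" and u2: "u \<notin> ?U" by (auto simp: subset_iff)
    have "\<not> matched z u" using matched_sub[OF u1] u2 by blast
    then show ?thesis using that u1 by blast
  qed
  have zu: "\<not> z ! u" using u one_match(1)[OF A u(1)] unfolding matched_def by blast
  have yu: "\<not> y ! u"
  proof
    assume "y ! u"
    then obtain i where "i < ?n" "z ! i" "mate z i = u" using f_nth[OF A u(1)] unfolding y_def by auto
    then show False using u(2) one_match(1)[OF A] unfolding matched_def by blast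
  qed
  have yu2: "\<not> matched y u"
  proof
    assume "matched y u"
    then have "f y ! u" using f_nth0[of u y] u ly yu by simp
    then show False using fy zu by simp
  qed
  have finO: "finite ?O" by simp
  have neO: "?O \<noteq> {}"
  proof
    assume "?O = {}"
    then have "count_list z True = 0" using count_card[of z] by simp
    then show False using k by simp
  qed
  define M where "M = Max (rk ?n u ` ?O)"
  have "M \<in> rk ?n u ` ?O" unfolding M_def using finO neO by simp
  then obtain i where i: "i < ?n" "z ! i" "rk ?n u i = M" by auto
  have maxM: "rk ?n u j \<le> M" if "j \<in> ?O" for j unfolding M_def using finO that by simp
  define m where "m = mate z i"
  have bm: "bwd y i m" unfolding y_def m_def using one_bwd[OF A i(1,2)] .
  then have ym0: "m < length y" "y ! m" unfolding bwd_def by blast+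
  then have ym: "m < ?n" "y ! m" using ly by simp_all
  have r1: "rk ?n u m > rk ?n u i" unfolding m_def using rank_mate[OF A i(1,2) u] .
  define m' where "m' = mate y m"
  have r2: "rk ?n u m' > rk ?n u m" unfolding m'_def using rank_mate[OF Ay _ ym(2)] ym(1) u(1) yu2 ly by simp
  have m'l: "m' < ?n" unfolding m'_def using mate_lt[of y m] ly n0 by simp
  have hm: "has_match y m" using one_match(1)[OF Ay ym0] .
  have my: "matched y m'" unfolding matched_def m'_def using ym0 hm by blast
  have nym: "\<not> y ! m'" unfolding m'_def using one_mate_zero[OF Ay ym0] .
  have "f y ! m' = (if matched y m' then \<not> y ! m' else y ! m')" using f_nth0[of m' y] m'l ly by simp
  then have "z ! m'" using fy my nym by simp
  then have "rk ?n u m' \<le> M" using maxM m'l by simp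
  then show False using r1 r2 i(3) by simp
qed



lemma X_A: "z \<in> X n k \<Longrightarrow> 2 * k < n \<Longrightarrow> 2 * count_list z True < length z"
  by (simp add: X_def)

lemma f_X: "z \<in> X n k \<Longrightarrow> 2 * k < n \<Longrightarrow> f z \<in> X n k"
  using f_count[OF X_A] by (simp add: X_def)

lemma fpow_X: "z \<in> X n k \<Longrightarrow> 2 * k < n \<Longrightarrow> (f ^^ i) z \<in> X n k"
  by (induction i) (simp_all add: f_X)

lemma f_inj_X: assumes nk: "2 * k < n" shows "inj_on f (X n k)"
proof (rule inj_onI)
  fix a b assume a: "a \<in> X n k" and b: "b \<in> X n k" and e: "f a = f b"
  have "length a = length b" using a b by (simp add: X_def)
  then show "a = b" using f_inj[OF X_A[OF a nk] X_A[OF b nk]] e by blast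
qed

lemma fpow_cancel: "2 * k < n \<Longrightarrow> a \<in> X n k \<Longrightarrow> b \<in> X n k \<Longrightarrow> (f ^^ i) a = (f ^^ i) b \<Longrightarrow> a = b"
proof (induction i)
  case (Suc i)
  have "f ((f ^^ i) a) = f ((f ^^ i) b)" using Suc.prems(4) by simp
  then have "(f ^^ i) a = (f ^^ i) b"
    using inj_onD[OF f_inj_X[OF Suc.prems(1)] _ fpow_X[OF Suc.prems(2,1)] fpow_X[OF Suc.prems(3,1)]]
    by blast
  then show ?case using Suc.IH Suc.prems(1-3) by blast
qed simp

lemma finite_X: "finite (X n k)"
proof -
  have "X n k \<subseteq> {xs. set xs \<subseteq> UNIV \<and> length xs = n}" by (auto simp: X_def)
  then show ?thesis using finite_lists_length_eq[of "UNIV :: bool set" n] finite_subset by auto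
qed

lemma period_ex:
  assumes nk: "2 * k < n" and x: "x \<in> X n k"
  shows "\<exists>p>0. (f ^^ p) x = x"
proof -
  let ?g = "\<lambda>i. (f ^^ i) x"
  have "?g ` {..card (X n k)} \<subseteq> X n k" using fpow_X[OF x nk] by auto
  then have "card (?g ` {..card (X n k)}) \<le> card (X n k)" using finite_X card_mono by blast
  then have "\<not> inj_on ?g {..card (X n k)}"
  proof -
    assume c: "card (?g ` {..card (X n k)}) \<le> card (X n k)"
    show ?thesis
    proof
      assume "inj_on ?g {..card (X n k)}"
      then have "card (?g ` {..card (X n k)}) = Suc (card (X n k))" by (simp add: card_image)
      then show False using c by simp
    qed
  qed
  then obtain i j where ij: "i \<le> card (X n k)" "j \<le> card (X n k)" "i \<noteq> j" "?g i = ?g j"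
    unfolding inj_on_def by auto
  have main: "\<exists>p>0. (f ^^ p) x = x" if "i < j" "?g i = ?g j" for i j
  proof -
    have "(f ^^ i) ((f ^^ (j - i)) x) = (f ^^ i) x"
      using that by (simp add: funpow_add[symmetric, THEN fun_cong, simplified comp_def])
    then have "(f ^^ (j - i)) x = x" using fpow_cancel[OF nk fpow_X[OF x nk] x] by blast
    then show ?thesis using that by (intro exI[of _ "j - i"]) simp
  qed
  show ?thesis using ij main by (metis nat_neq_iff)
qed

lemma funpow_period: "(f ^^ p) x = x \<Longrightarrow> (f ^^ (p * c)) x = x"
proof (induction c)
  case (Suc c)
  have "(f ^^ (p * Suc c)) x = (f ^^ p) ((f ^^ (p * c)) x)" by (simp add: funpow_add)
  then show ?case using Suc by simp
qed simp

lemma orbit_sub: "y \<in> orbit x \<Longrightarrow> orbit y \<subseteq> orbit x"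
proof
  assume "y \<in> orbit x"
  then obtain c where c: "y = (f ^^ c) x" unfolding orbit_def by auto
  fix z assume "z \<in> orbit y"
  then obtain i where "z = (f ^^ i) y" unfolding orbit_def by auto
  then have "z = (f ^^ (i + c)) x" using c by (simp add: funpow_add)
  then show "z \<in> orbit x" unfolding orbit_def by blast
qed

lemma meet_in_orbit:
  assumes nk: "2 * k < n" and y: "y \<in> X n k" and e: "(f ^^ a) x = (f ^^ b) y"
  shows "y \<in> orbit x"
proof -
  obtain p where p: "p > 0" "(f ^^ p) y = y" using period_ex[OF nk y] by blast
  have "b \<le> p * b" using p by simp
  have "y = (f ^^ (p * b)) y" using funpow_period[OF p(2)] by simp
  also have "\<dots> = (f ^^ (p * b - b)) ((f ^^ b) y)"
    using \<open>b \<le> p * b\<close> by (simp add: funpow_add[symmetric, THEN fun_cong, simplified comp_def])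
  also have "\<dots> = (f ^^ (p * b - b + a)) x"
    using e by (simp add: funpow_add)
  finally show ?thesis unfolding orbit_def by blast
qed

theorem mainTheorem6:
  fixes n k :: nat
  assumes "k \<ge> 1" and "n \<ge> 2 * k + 1"
  shows "bij_betw f (X n k) (X n k)
    \<and> (\<forall>x \<in> X n k. kneser_adj x (f x) \<and> f x \<noteq> x \<and> f (f x) \<noteq> x)
    \<and> (\<forall>x \<in> X n k. \<exists>p \<ge> 3. (f ^^ p) x = x
          \<and> (\<forall>i < p. \<forall>j < p. (f ^^ i) x = (f ^^ j) x \<longrightarrow> i = j)
          \<and> (\<forall>i < p. (f ^^ i) x \<in> X n k \<and> kneser_adj ((f ^^ i) x) ((f ^^ Suc i) x)))
    \<and> (\<forall>x \<in> X n k. orbit x \<subseteq> X n k)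
    \<and> (\<forall>x \<in> X n k. \<forall>y \<in> X n k. orbit x \<inter> orbit y \<noteq> {} \<longrightarrow> orbit x = orbit y)
    \<and> (\<Union>x \<in> X n k. orbit x) = X n k"
proof -
  have nk: "2 * k < n" using assms by simp
  have adj: "kneser_adj x (f x)" if "x \<in> X n k" for x using f_adj[OF X_A[OF that nk]] .
  have neq1: "f x \<noteq> x" if x: "x \<in> X n k" for x
  proof
    assume fx: "f x = x"
    have "count_list x True \<noteq> 0" using x assms by (simp add: X_def)
    then have "True \<in> set x" by (auto simp: count_list_0_iff)
    then obtain i where i: "i < length x" "x ! i" by (metis in_set_conv_nth)
    then have "\<not> f x ! i" using f_nth[OF X_A[OF x nk] i(1)] by simp
    then show False using fx i by simp
  qed
  have neq2: "f (f x) \<noteq> x" if x: "x \<in> X n k" for x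
    using f_f_neq[OF X_A[OF x nk]] x assms by (simp add: X_def)
  have bij: "bij_betw f (X n k) (X n k)"
  proof -
    have "f ` X n k \<subseteq> X n k" using f_X nk by auto
    then have "f ` X n k = X n k" using endo_inj_surj[OF finite_X _ f_inj_X[OF nk]] by blast
    then show ?thesis using f_inj_X[OF nk] by (simp add: bij_betw_def)
  qed
  have cyc: "\<exists>p \<ge> 3. (f ^^ p) x = x
          \<and> (\<forall>i < p. \<forall>j < p. (f ^^ i) x = (f ^^ j) x \<longrightarrow> i = j)
          \<and> (\<forall>i < p. (f ^^ i) x \<in> X n k \<and> kneser_adj ((f ^^ i) x) ((f ^^ Suc i) x))"
    if x: "x \<in> X n k" for x
  proof -
    define p where "p = (LEAST p. p > 0 \<and> (f ^^ p) x = x)"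
    have pp: "p > 0 \<and> (f ^^ p) x = x" unfolding p_def using period_ex[OF nk x] by (rule LeastI_ex)
    have lst: "\<not> (q > 0 \<and> (f ^^ q) x = x)" if "q < p" for q
      using that unfolding p_def by (rule not_less_Least)
    have "p \<noteq> 1" using pp neq1[OF x] by auto
    moreover have "p \<noteq> 2" using pp neq2[OF x] by (auto simp: numeral_2_eq_2)
    ultimately have p3: "p \<ge> 3" using pp by linarith
    have dist: "i = j" if ij: "i < p" "j < p" "(f ^^ i) x = (f ^^ j) x" for i j
    proof -
      have gen: "a = b" if ab: "a \<le> b" "b < p" "(f ^^ a) x = (f ^^ b) x" for a b
      proof (rule ccontr)
        assume "a \<noteq> b"
        have "(f ^^ a) ((f ^^ (b - a)) x) = (f ^^ a) x"
          using ab by (simp add: funpow_add[symmetric, THEN fun_cong, simplified comp_def])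
        then have "(f ^^ (b - a)) x = x" using fpow_cancel[OF nk fpow_X[OF x nk] x] by blast
        moreover have "b - a < p" "0 < b - a" using ab \<open>a \<noteq> b\<close> by auto
        ultimately show False using lst[of "b - a"] by blast
      qed
      show ?thesis
      proof (cases "i \<le> j")
        case True then show ?thesis using gen[of i j] ij by blast
      next
        case False then show ?thesis using gen[of j i] ij by simp
      qed
    qed
    have ad: "(f ^^ i) x \<in> X n k \<and> kneser_adj ((f ^^ i) x) ((f ^^ Suc i) x)" for i
      using fpow_X[OF x nk, of i] adj[OF fpow_X[OF x nk, of i]] by simp
    have c1: "\<forall>i < p. \<forall>j < p. (f ^^ i) x = (f ^^ j) x \<longrightarrow> i = j" using dist by blast
    have c2: "\<forall>i < p. (f ^^ i) x \<in> X n k \<and> kneser_adj ((f ^^ i) x) ((f ^^ Suc i) x)" using ad by blast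
    show ?thesis apply (rule exI[of _ p]) using p3 pp c1 c2 by simp
  qed
  have osub: "orbit x \<subseteq> X n k" if "x \<in> X n k" for x
    using fpow_X[OF that nk] unfolding orbit_def by auto
  have opart: "orbit x = orbit y" if xy: "x \<in> X n k" "y \<in> X n k" "orbit x \<inter> orbit y \<noteq> {}" for x y
  proof -
    obtain a b where e: "(f ^^ a) x = (f ^^ b) y" using xy(3) unfolding orbit_def by auto
    have "y \<in> orbit x" using meet_in_orbit[OF nk xy(2) e] .
    moreover have "x \<in> orbit y" using meet_in_orbit[OF nk xy(1) e[symmetric]] .
    ultimately show ?thesis using orbit_sub by blast
  qed
  have ounion: "(\<Union>x \<in> X n k. orbit x) = X n k"
  proof
    show "(\<Union>x \<in> X n k. orbit x) \<subseteq> X n k" using osub by blast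
    show "X n k \<subseteq> (\<Union>x \<in> X n k. orbit x)"
    proof
      fix x assume "x \<in> X n k"
      moreover have "x \<in> orbit x"
      proof -
        have "x = (f ^^ 0) x" by simp
        then show ?thesis unfolding orbit_def by blast
      qed
      ultimately show "x \<in> (\<Union>x \<in> X n k. orbit x)" by blast
    qed
  qed
  have c2: "\<forall>x \<in> X n k. kneser_adj x (f x) \<and> f x \<noteq> x \<and> f (f x) \<noteq> x" using adj neq1 neq2 by blast
  have c3: "\<forall>x \<in> X n k. \<exists>p \<ge> 3. (f ^^ p) x = x
          \<and> (\<forall>i < p. \<forall>j < p. (f ^^ i) x = (f ^^ j) x \<longrightarrow> i = j)
          \<and> (\<forall>i < p. (f ^^ i) x \<in> X n k \<and> kneser_adj ((f ^^ i) x) ((f ^^ Suc i) x))"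
    using cyc by blast
  have c4: "\<forall>x \<in> X n k. orbit x \<subseteq> X n k" using osub by blast
  have c5: "\<forall>x \<in> X n k. \<forall>y \<in> X n k. orbit x \<inter> orbit y \<noteq> {} \<longrightarrow> orbit x = orbit y"
    using opart by blast
  show ?thesis by (intro conjI bij c2 c3 c4 c5 ounion)
qed


end
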